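(* ($\mathrm{ZFCU}_R$) Let $\kappa$ be an infinite cardinal. Assume the DC$_\kappa$-scheme holds and the class $\mathcal{A}$ of urelements is a proper class. Then $\kappa$ is realized.
   Context: $\mathrm{ZFCU}_R$ is ZFC with urelements (language $\{\in,\mathcal{A}\}$, $\mathcal{A}$ the urelement predicate), formulated with Replacement rather than Collection, with AC. "$\mathcal{A}$ is a proper class" means there is no set whose members are exactly the urelements. A set is realized if it is equinumerous with some set of urelements. DC$_\kappa$-scheme: for every formula $\varphi$ and parameter $u$, if $\forall x\exists y\varphi(x,y,u)$ then there is a function $f$ with domain $\kappa$ such that $\varphi(f\restriction\alpha,f(\alpha),u)$ for all $\alpha<\kappa$. *)

theory Defs
  imports Main
begin

text \<open>A structure is a type 'a (the universe) with a membership relation E and an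
urelement predicate U.  First-order formulas of the language {\<in>, A} use
de Bruijn indices; an environment is a function nat \<Rightarrow> 'a.\<close>

datatype fm = Mem nat nat | Equ nat nat | Ur nat | Neg fm | Conj fm fm | Ex fm

primrec sat :: "('a \<Rightarrow> 'a \<Rightarrow> bool) \<Rightarrow> ('a \<Rightarrow> bool) \<Rightarrow> (nat \<Rightarrow> 'a) \<Rightarrow> fm \<Rightarrow> bool" where
  "sat E U s (Mem i j) = E (s i) (s j)"
| "sat E U s (Equ i j) = (s i = s j)"
| "sat E U s (Ur i) = U (s i)"
| "sat E U s (Neg \<phi>) = (\<not> sat E U s \<phi>)"
| "sat E U s (Conj \<phi> \<psi>) = (sat E U s \<phi> \<and> sat E U s \<psi>)"
| "sat E U s (Ex \<phi>) = (\<exists>a. sat E U (case_nat a s) \<phi>)"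

definition isSet :: "('a \<Rightarrow> bool) \<Rightarrow> 'a \<Rightarrow> bool" where
  "isSet U x \<longleftrightarrow> \<not> U x"

definition is_upair :: "('a \<Rightarrow> 'a \<Rightarrow> bool) \<Rightarrow> ('a \<Rightarrow> bool) \<Rightarrow> 'a \<Rightarrow> 'a \<Rightarrow> 'a \<Rightarrow> bool" where
  "is_upair E U x a b \<longleftrightarrow> isSet U x \<and> (\<forall>z. E z x \<longleftrightarrow> z = a \<or> z = b)"

definition is_opair :: "('a \<Rightarrow> 'a \<Rightarrow> bool) \<Rightarrow> ('a \<Rightarrow> bool) \<Rightarrow> 'a \<Rightarrow> 'a \<Rightarrow> 'a \<Rightarrow> bool" where
  "is_opair E U p a b \<longleftrightarrow> isSet U p \<and> (\<forall>z. E z p \<longleftrightarrow> is_upair E U z a a \<or> is_upair E U z a b)"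

definition rel :: "('a \<Rightarrow> 'a \<Rightarrow> bool) \<Rightarrow> ('a \<Rightarrow> bool) \<Rightarrow> 'a \<Rightarrow> 'a \<Rightarrow> 'a \<Rightarrow> bool" where
  "rel E U r a b \<longleftrightarrow> (\<exists>p. E p r \<and> is_opair E U p a b)"

definition is_empty :: "('a \<Rightarrow> 'a \<Rightarrow> bool) \<Rightarrow> ('a \<Rightarrow> bool) \<Rightarrow> 'a \<Rightarrow> bool" where
  "is_empty E U x \<longleftrightarrow> isSet U x \<and> (\<forall>z. \<not> E z x)"

definition is_succ :: "('a \<Rightarrow> 'a \<Rightarrow> bool) \<Rightarrow> ('a \<Rightarrow> bool) \<Rightarrow> 'a \<Rightarrow> 'a \<Rightarrow> bool" where
  "is_succ E U s y \<longleftrightarrow> isSet U s \<and> (\<forall>z. E z s \<longleftrightarrow> E z y \<or> z = y)"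

definition wellorders :: "('a \<Rightarrow> 'a \<Rightarrow> bool) \<Rightarrow> ('a \<Rightarrow> bool) \<Rightarrow> 'a \<Rightarrow> 'a \<Rightarrow> bool" where
  "wellorders E U r x \<longleftrightarrow> isSet U r
     \<and> (\<forall>p. E p r \<longrightarrow> (\<exists>a b. E a x \<and> E b x \<and> is_opair E U p a b))
     \<and> (\<forall>a. E a x \<longrightarrow> \<not> rel E U r a a)
     \<and> (\<forall>a b c. E a x \<and> E b x \<and> E c x \<and> rel E U r a b \<and> rel E U r b c \<longrightarrow> rel E U r a c)
     \<and> (\<forall>a b. E a x \<and> E b x \<longrightarrow> rel E U r a b \<or> a = b \<or> rel E U r b a)
     \<and> (\<forall>y. isSet U y \<and> (\<forall>z. E z y \<longrightarrow> E z x) \<and> (\<exists>z. E z y) \<longrightarrow>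
            (\<exists>m. E m y \<and> (\<forall>z. E z y \<longrightarrow> \<not> rel E U r z m)))"

text \<open>The axioms of ZFCU_R (ZFC with urelements, Replacement instead of Collection, AC
in the form "every set is well-orderable").\<close>
definition ZFCU_R :: "('a \<Rightarrow> 'a \<Rightarrow> bool) \<Rightarrow> ('a \<Rightarrow> bool) \<Rightarrow> bool" where
  "ZFCU_R E U \<longleftrightarrow>
     \<comment> \<open>urelements have no members\<close>
     (\<forall>x z. U x \<longrightarrow> \<not> E z x)
     \<comment> \<open>extensionality for sets\<close>
   \<and> (\<forall>x y. isSet U x \<and> isSet U y \<and> (\<forall>z. E z x \<longleftrightarrow> E z y) \<longrightarrow> x = y)
     \<comment> \<open>foundation\<close>
   \<and> (\<forall>x. (\<exists>y. E y x) \<longrightarrow> (\<exists>y. E y x \<and> \<not> (\<exists>z. E z x \<and> E z y)))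
     \<comment> \<open>pairing\<close>
   \<and> (\<forall>a b. \<exists>y. is_upair E U y a b)
     \<comment> \<open>union\<close>
   \<and> (\<forall>x. \<exists>y. isSet U y \<and> (\<forall>z. E z y \<longleftrightarrow> (\<exists>w. E w x \<and> E z w)))
     \<comment> \<open>power set\<close>
   \<and> (\<forall>x. isSet U x \<longrightarrow> (\<exists>y. isSet U y \<and>
           (\<forall>z. E z y \<longleftrightarrow> isSet U z \<and> (\<forall>w. E w z \<longrightarrow> E w x))))
     \<comment> \<open>infinity\<close>
   \<and> (\<exists>x. isSet U x \<and> (\<exists>e. E e x \<and> is_empty E U e)
           \<and> (\<forall>y. E y x \<longrightarrow> (\<exists>y'. E y' x \<and> is_succ E U y' y)))
     \<comment> \<open>separation scheme\<close>
   \<and> (\<forall>\<phi> s x. isSet U x \<longrightarrow> (\<exists>y. isSet U y \<and>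
           (\<forall>z. E z y \<longleftrightarrow> E z x \<and> sat E U (case_nat z s) \<phi>)))
     \<comment> \<open>replacement scheme\<close>
   \<and> (\<forall>\<phi> s x. isSet U x \<longrightarrow>
           (\<forall>a. E a x \<longrightarrow> (\<exists>!b. sat E U (case_nat a (case_nat b s)) \<phi>)) \<longrightarrow>
           (\<exists>y. isSet U y \<and> (\<forall>b. E b y \<longleftrightarrow> (\<exists>a. E a x \<and> sat E U (case_nat a (case_nat b s)) \<phi>))))
     \<comment> \<open>choice: every set is well-orderable\<close>
   \<and> (\<forall>x. isSet U x \<longrightarrow> (\<exists>r. wellorders E U r x))"

definition transitive_set :: "('a \<Rightarrow> 'a \<Rightarrow> bool) \<Rightarrow> ('a \<Rightarrow> bool) \<Rightarrow> 'a \<Rightarrow> bool" where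
  "transitive_set E U x \<longleftrightarrow> isSet U x \<and> (\<forall>y z. E y x \<and> E z y \<longrightarrow> E z x)"

text \<open>von Neumann ordinal (in the presence of foundation): transitive set of transitive sets.\<close>
definition is_ordinal :: "('a \<Rightarrow> 'a \<Rightarrow> bool) \<Rightarrow> ('a \<Rightarrow> bool) \<Rightarrow> 'a \<Rightarrow> bool" where
  "is_ordinal E U x \<longleftrightarrow> transitive_set E U x \<and> (\<forall>y. E y x \<longrightarrow> transitive_set E U y)"

definition is_function :: "('a \<Rightarrow> 'a \<Rightarrow> bool) \<Rightarrow> ('a \<Rightarrow> bool) \<Rightarrow> 'a \<Rightarrow> bool" where
  "is_function E U f \<longleftrightarrow> isSet U f
     \<and> (\<forall>p. E p f \<longrightarrow> (\<exists>a b. is_opair E U p a b))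
     \<and> (\<forall>a b c. rel E U f a b \<and> rel E U f a c \<longrightarrow> b = c)"

definition has_domain :: "('a \<Rightarrow> 'a \<Rightarrow> bool) \<Rightarrow> ('a \<Rightarrow> bool) \<Rightarrow> 'a \<Rightarrow> 'a \<Rightarrow> bool" where
  "has_domain E U f d \<longleftrightarrow> (\<forall>a. E a d \<longleftrightarrow> (\<exists>b. rel E U f a b))"

definition is_restriction :: "('a \<Rightarrow> 'a \<Rightarrow> bool) \<Rightarrow> ('a \<Rightarrow> bool) \<Rightarrow> 'a \<Rightarrow> 'a \<Rightarrow> 'a \<Rightarrow> bool" where
  "is_restriction E U g f a \<longleftrightarrow> isSet U g \<and>
     (\<forall>p. E p g \<longleftrightarrow> E p f \<and> (\<exists>c d. is_opair E U p c d \<and> E c a))"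

definition equinumerous :: "('a \<Rightarrow> 'a \<Rightarrow> bool) \<Rightarrow> ('a \<Rightarrow> bool) \<Rightarrow> 'a \<Rightarrow> 'a \<Rightarrow> bool" where
  "equinumerous E U x y \<longleftrightarrow> (\<exists>f. isSet U f
     \<and> (\<forall>p. E p f \<longrightarrow> (\<exists>a b. E a x \<and> E b y \<and> is_opair E U p a b))
     \<and> (\<forall>a. E a x \<longrightarrow> (\<exists>!b. rel E U f a b))
     \<and> (\<forall>b. E b y \<longrightarrow> (\<exists>!a. rel E U f a b)))"

definition is_cardinal :: "('a \<Rightarrow> 'a \<Rightarrow> bool) \<Rightarrow> ('a \<Rightarrow> bool) \<Rightarrow> 'a \<Rightarrow> bool" where
  "is_cardinal E U k \<longleftrightarrow> is_ordinal E U k \<and> (\<forall>a. E a k \<longrightarrow> \<not> equinumerous E U a k)"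

definition is_nat :: "('a \<Rightarrow> 'a \<Rightarrow> bool) \<Rightarrow> ('a \<Rightarrow> bool) \<Rightarrow> 'a \<Rightarrow> bool" where
  "is_nat E U n \<longleftrightarrow> is_ordinal E U n \<and>
     (\<forall>m. m = n \<or> E m n \<longrightarrow> is_empty E U m \<or> (\<exists>k. is_succ E U m k))"

definition infinite_cardinal :: "('a \<Rightarrow> 'a \<Rightarrow> bool) \<Rightarrow> ('a \<Rightarrow> bool) \<Rightarrow> 'a \<Rightarrow> bool" where
  "infinite_cardinal E U k \<longleftrightarrow> is_cardinal E U k \<and> \<not> is_nat E U k"

definition urelements_proper_class :: "('a \<Rightarrow> 'a \<Rightarrow> bool) \<Rightarrow> ('a \<Rightarrow> bool) \<Rightarrow> bool" where
  "urelements_proper_class E U \<longleftrightarrow> \<not> (\<exists>y. isSet U y \<and> (\<forall>z. E z y \<longleftrightarrow> U z))"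

definition realized :: "('a \<Rightarrow> 'a \<Rightarrow> bool) \<Rightarrow> ('a \<Rightarrow> bool) \<Rightarrow> 'a \<Rightarrow> bool" where
  "realized E U x \<longleftrightarrow> (\<exists>y. isSet U y \<and> (\<forall>z. E z y \<longrightarrow> U z) \<and> equinumerous E U x y)"

text \<open>DC_kappa scheme: variable 0 is x, variable 1 is y, the remaining variables are the
parameters (given by s).\<close>
definition DC_scheme :: "('a \<Rightarrow> 'a \<Rightarrow> bool) \<Rightarrow> ('a \<Rightarrow> bool) \<Rightarrow> 'a \<Rightarrow> bool" where
  "DC_scheme E U k \<longleftrightarrow> (\<forall>\<phi> s.
     (\<forall>x. \<exists>y. sat E U (case_nat x (case_nat y s)) \<phi>) \<longrightarrow>
     (\<exists>f. is_function E U f \<and> has_domain E U f k \<and>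
        (\<forall>\<alpha>. E \<alpha> k \<longrightarrow> (\<exists>g v. is_restriction E U g f \<alpha> \<and> rel E U f \<alpha> v
               \<and> sat E U (case_nat g (case_nat v s)) \<phi>))))"

end

theory Submission
  imports Defs
begin

lemma Z_found0: assumes "ZFCU_R E U" shows "\<forall>x. (\<exists>y. E y x) \<longrightarrow> (\<exists>y. E y x \<and> \<not> (\<exists>z. E z x \<and> E z y))"
  using assms unfolding ZFCU_R_def by (elim conjE) assumption
lemma Z_ext0: assumes "ZFCU_R E U" shows "\<forall>x y. isSet U x \<and> isSet U y \<and> (\<forall>z. E z x \<longleftrightarrow> E z y) \<longrightarrow> x = y"
  using assms unfolding ZFCU_R_def by (elim conjE) assumption
lemma Z_pair0: assumes "ZFCU_R E U" shows "\<forall>a b. \<exists>y. is_upair E U y a b"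
  using assms unfolding ZFCU_R_def by (elim conjE) assumption
lemma Z_union0: assumes "ZFCU_R E U" shows "\<forall>x. \<exists>y. isSet U y \<and> (\<forall>z. E z y \<longleftrightarrow> (\<exists>w. E w x \<and> E z w))"
  using assms unfolding ZFCU_R_def by (elim conjE) assumption
lemma Z_sep0: assumes "ZFCU_R E U" shows "\<forall>\<phi> s x. isSet U x \<longrightarrow> (\<exists>y. isSet U y \<and>
           (\<forall>z. E z y \<longleftrightarrow> E z x \<and> sat E U (case_nat z s) \<phi>))"
  using assms unfolding ZFCU_R_def by (elim conjE) assumption
lemma Z_found: "ZFCU_R E U \<Longrightarrow> E y x \<Longrightarrow> \<exists>y. E y x \<and> \<not> (\<exists>z. E z x \<and> E z y)"
  using Z_found0 by metis
lemma Z_ext: "ZFCU_R E U \<Longrightarrow> isSet U x \<Longrightarrow> isSet U y \<Longrightarrow> (\<And>z. E z x \<longleftrightarrow> E z y) \<Longrightarrow> x = y"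
  using Z_ext0 by metis
lemma Z_pair: "ZFCU_R E U \<Longrightarrow> \<exists>y. is_upair E U y a b"
  using Z_pair0 by metis
lemma Z_union: "ZFCU_R E U \<Longrightarrow> \<exists>y. isSet U y \<and> (\<forall>z. E z y \<longleftrightarrow> (\<exists>w. E w x \<and> E z w))"
  using Z_union0 by metis
lemma Z_sep: "ZFCU_R E U \<Longrightarrow> isSet U x \<Longrightarrow>
   \<exists>y. isSet U y \<and> (\<forall>z. E z y \<longleftrightarrow> E z x \<and> sat E U (case_nat z s) \<phi>)"
  using Z_sep0 by metis

lemma Z_sepU: "ZFCU_R E U \<Longrightarrow> isSet U x \<Longrightarrow>
   \<exists>y. isSet U y \<and> (\<forall>z. E z y \<longleftrightarrow> E z x \<and> U z)"
  using Z_sep[of E U x s "Ur 0"] by simp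

lemma Z_uu: "ZFCU_R E U \<Longrightarrow> \<exists>y. isSet U y \<and> (\<forall>z. E z y \<longleftrightarrow> (\<exists>p q. E p x \<and> E q p \<and> E z q))"
proof -
  assume Z: "ZFCU_R E U"
  obtain w where w: "\<forall>z. E z w \<longleftrightarrow> (\<exists>p. E p x \<and> E z p)" using Z_union[OF Z] by blast
  obtain y where y: "isSet U y" "\<forall>z. E z y \<longleftrightarrow> (\<exists>q. E q w \<and> E z q)" using Z_union[OF Z] by blast
  have "\<forall>z. E z y \<longleftrightarrow> (\<exists>p q. E p x \<and> E q p \<and> E z q)"
    using y(2) w by auto
  thus ?thesis using y(1) by blast
qed

lemma opair_mem: "is_opair E U p a b \<Longrightarrow> is_upair E U q a b \<Longrightarrow> E q p \<and> E b q"
proof -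
  assume o: "is_opair E U p a b" and u: "is_upair E U q a b"
  from o have "\<forall>z. E z p \<longleftrightarrow> is_upair E U z a a \<or> is_upair E U z a b" by (simp add: is_opair_def)
  hence "E q p" using u by blast
  moreover from u have "E b q" by (simp add: is_upair_def)
  ultimately show ?thesis by blast
qed

lemma ord_set: "is_ordinal E U k \<Longrightarrow> isSet U k"
  unfolding is_ordinal_def transitive_set_def by blast
lemma ord_tr: "is_ordinal E U k \<Longrightarrow> E x k \<Longrightarrow> E y x \<Longrightarrow> E y k"
  unfolding is_ordinal_def transitive_set_def by blast
lemma ord_el: "is_ordinal E U k \<Longrightarrow> E x k \<Longrightarrow> transitive_set E U x"
  unfolding is_ordinal_def by blast
lemma ord_elset: "is_ordinal E U k \<Longrightarrow> E x k \<Longrightarrow> \<not> U x"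
proof -
  assume "is_ordinal E U k" "E x k"
  hence "transitive_set E U x" by (rule ord_el)
  thus "\<not> U x" by (simp add: transitive_set_def isSet_def)
qed

lemma tri:
  assumes Z: "ZFCU_R E U" and ord: "is_ordinal E U k" and ak: "E a k" and bk: "E b k"
  shows "E a b \<or> a = b \<or> E b a"
proof (rule ccontr)
  assume nab: "\<not> (E a b \<or> a = b \<or> E b a)"
  have kset: "isSet U k" and ktr: "\<And>x y. E x k \<Longrightarrow> E y x \<Longrightarrow> E y k"
    and kel: "\<And>x. E x k \<Longrightarrow> transitive_set E U x"
    using ord_set[OF ord] ord_tr[OF ord] ord_el[OF ord] by auto
  obtain X where X: "\<forall>z. E z X \<longleftrightarrow> E z k \<and> sat E U (case_nat z (\<lambda>_. k))
      (Ex (Conj (Mem 0 2) (Conj (Neg (Mem 1 0)) (Conj (Neg (Equ 1 0)) (Neg (Mem 0 1))))))"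
    using Z_sep[OF Z kset, where s="\<lambda>_. k" and \<phi>="Ex (Conj (Mem 0 2) (Conj (Neg (Mem 1 0)) (Conj (Neg (Equ 1 0)) (Neg (Mem 0 1)))))"] by (elim exE conjE) (rule that)
  have X': "\<And>z. E z X \<longleftrightarrow> E z k \<and> (\<exists>y. E y k \<and> \<not> E z y \<and> z \<noteq> y \<and> \<not> E y z)"
    using X by auto
  have "E a X" using X'[of a] ak bk nab by blast
  then obtain a0 where a0X: "E a0 X" and a0min: "\<not> (\<exists>z. E z X \<and> E z a0)"
    using Z_found[OF Z] by blast
  have a0k: "E a0 k" using a0X X'[of a0] by blast
  obtain Y where Y: "\<forall>z. E z Y \<longleftrightarrow> E z k \<and> sat E U (case_nat z (\<lambda>_. a0))
      (Conj (Neg (Mem 1 0)) (Conj (Neg (Equ 1 0)) (Neg (Mem 0 1))))"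
    using Z_sep[OF Z kset, where s="\<lambda>_. a0" and \<phi>="Conj (Neg (Mem 1 0)) (Conj (Neg (Equ 1 0)) (Neg (Mem 0 1)))"] by (elim exE conjE) (rule that)
  have Y': "\<And>z. E z Y \<longleftrightarrow> E z k \<and> \<not> E a0 z \<and> a0 \<noteq> z \<and> \<not> E z a0"
    using Y by auto
  obtain c where "E c k" "\<not> E a0 c" "a0 \<noteq> c" "\<not> E c a0" using a0X X'[of a0] by blast
  hence "E c Y" using Y'[of c] by blast
  then obtain b0 where b0Y: "E b0 Y" and b0min: "\<not> (\<exists>z. E z Y \<and> E z b0)"
    using Z_found[OF Z] by blast
  have b0k: "E b0 k" and inc: "\<not> E a0 b0" "a0 \<noteq> b0" "\<not> E b0 a0" using b0Y Y'[of b0] by auto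
  have ta: "transitive_set E U a0" and tb: "transitive_set E U b0" using kel a0k b0k by auto
  have tra: "\<And>x y. E x a0 \<Longrightarrow> E y x \<Longrightarrow> E y a0" using ta unfolding transitive_set_def by blast
  have trb: "\<And>x y. E x b0 \<Longrightarrow> E y x \<Longrightarrow> E y b0" using tb unfolding transitive_set_def by blast
  have "a0 = b0"
  proof (rule Z_ext[OF Z])
    show "isSet U a0" "isSet U b0" using ta tb by (auto simp: transitive_set_def)
    fix z
    show "E z a0 \<longleftrightarrow> E z b0"
    proof
      assume za: "E z a0"
      have zk: "E z k" using ktr a0k za by blast
      have "\<not> E z X" using a0min za by blast
      hence "E z b0 \<or> z = b0 \<or> E b0 z" using X'[of z] zk b0k by blast
      moreover have "\<not> E b0 z" using tra za inc by blast
      ultimately show "E z b0" using za inc by blast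
    next
      assume zb: "E z b0"
      have zk: "E z k" using ktr b0k zb by blast
      have "\<not> E z Y" using b0min zb by blast
      hence "E a0 z \<or> a0 = z \<or> E z a0" using Y'[of z] zk by blast
      moreover have "\<not> E a0 z" using trb zb inc by blast
      ultimately show "E z a0" using zb inc by blast
    qed
  qed
  thus False using inc by blast
qed

theorem mainTheorem6:
  fixes E :: "'a \<Rightarrow> 'a \<Rightarrow> bool" and U :: "'a \<Rightarrow> bool" and \<kappa> :: 'a
  assumes "ZFCU_R E U"
    and "infinite_cardinal E U \<kappa>"
    and "DC_scheme E U \<kappa>"
    and "urelements_proper_class E U"
  shows "realized E U \<kappa>"
proof -
  have Z: "ZFCU_R E U" using assms by blast
  have ordk: "is_ordinal E U \<kappa>" using assms(2) by (simp add: infinite_cardinal_def is_cardinal_def)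
  have kelset: "\<And>x. E x \<kappa> \<Longrightarrow> \<not> U x" using ord_elset[OF ordk] by blast
  have ktr: "\<And>x y. E x \<kappa> \<Longrightarrow> E y x \<Longrightarrow> E y \<kappa>"
    using ord_tr[OF ordk] by blast
  define \<phi> where "\<phi> = Conj (Ur 1) (Neg (Ex (Conj (Mem 0 1) (Ex (Conj (Mem 0 1) (Mem 3 0))))))"
  have sat\<phi>: "\<And>x y s. sat E U (case_nat x (case_nat y s)) \<phi> \<longleftrightarrow> U y \<and> \<not> (\<exists>p q. E p x \<and> E q p \<and> E y q)"
    by (simp add: \<phi>_def)
  have tot: "\<forall>x. \<exists>y. sat E U (case_nat x (case_nat y (\<lambda>_. \<kappa>))) \<phi>"
  proof
    fix x
    obtain W where W: "isSet U W" "\<forall>z. E z W \<longleftrightarrow> (\<exists>p q. E p x \<and> E q p \<and> E z q)"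
      using Z_uu[OF Z] by blast
    obtain S where S: "isSet U S" "\<forall>z. E z S \<longleftrightarrow> E z W \<and> U z" using Z_sepU[OF Z W(1)] by blast
    obtain u where "\<not> (E u S \<longleftrightarrow> U u)" using assms(4) S(1) unfolding urelements_proper_class_def by blast
    hence "U u \<and> \<not> (\<exists>p q. E p x \<and> E q p \<and> E u q)" using S W by blast
    thus "\<exists>y. sat E U (case_nat x (case_nat y (\<lambda>_. \<kappa>))) \<phi>" using sat\<phi> by blast
  qed
  obtain f where ff: "is_function E U f" and fd: "has_domain E U f \<kappa>"
    and fdc: "\<forall>\<alpha>. E \<alpha> \<kappa> \<longrightarrow> (\<exists>g v. is_restriction E U g f \<alpha> \<and> rel E U f \<alpha> v
               \<and> sat E U (case_nat g (case_nat v (\<lambda>_. \<kappa>))) \<phi>)"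
    using assms(3) tot unfolding DC_scheme_def by blast
  have funv: "\<And>a b c. rel E U f a b \<Longrightarrow> rel E U f a c \<Longrightarrow> b = c" using ff by (simp add: is_function_def)
  define F where "F a = (THE v. rel E U f a v)" for a
  have Fr: "\<And>a. E a \<kappa> \<Longrightarrow> rel E U f a (F a)"
  proof -
    fix a assume "E a \<kappa>"
    then obtain b where b: "rel E U f a b" using fd by (auto simp: has_domain_def)
    show "rel E U f a (F a)" unfolding F_def by (rule theI[of _ b]) (use b funv in blast)+
  qed
  have Fu: "\<And>a b. rel E U f a b \<Longrightarrow> E a \<kappa> \<and> b = F a"
  proof -
    fix a b assume r: "rel E U f a b"
    hence ak: "E a \<kappa>" using fd unfolding has_domain_def by blast
    thus "E a \<kappa> \<and> b = F a" using funv[OF r Fr[OF ak]] by blast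
  qed
  have Fprop: "\<And>\<alpha>. E \<alpha> \<kappa> \<Longrightarrow> \<exists>g. is_restriction E U g f \<alpha> \<and> U (F \<alpha>) \<and> \<not> (\<exists>p q. E p g \<and> E q p \<and> E (F \<alpha>) q)"
  proof -
    fix \<alpha> assume a: "E \<alpha> \<kappa>"
    then obtain g v where "is_restriction E U g f \<alpha>" "rel E U f \<alpha> v" "sat E U (case_nat g (case_nat v (\<lambda>_. \<kappa>))) \<phi>"
      using fdc by blast
    moreover have "v = F \<alpha>" using Fu calculation(2) by blast
    ultimately show "?thesis \<alpha>" using sat\<phi> by blast
  qed
  have FU: "\<And>\<alpha>. E \<alpha> \<kappa> \<Longrightarrow> U (F \<alpha>)" using Fprop by blast
  have inj1: "\<And>\<alpha> \<beta>. E \<alpha> \<kappa> \<Longrightarrow> E \<beta> \<alpha> \<Longrightarrow> F \<beta> \<noteq> F \<alpha>"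
  proof
    fix \<alpha> \<beta> assume a: "E \<alpha> \<kappa>" and b: "E \<beta> \<alpha>" and eq: "F \<beta> = F \<alpha>"
    obtain g where g: "is_restriction E U g f \<alpha>" "\<not> (\<exists>p q. E p g \<and> E q p \<and> E (F \<alpha>) q)"
      using Fprop a by blast
    have bk: "E \<beta> \<kappa>" using ktr a b by blast
    obtain p where p: "E p f" "is_opair E U p \<beta> (F \<beta>)" using Fr[OF bk] by (auto simp: rel_def)
    have pg: "E p g" using g(1) p b unfolding is_restriction_def by blast
    obtain q where q: "is_upair E U q \<beta> (F \<beta>)" using Z_pair[OF Z] by blast
    show False using opair_mem[OF p(2) q] pg g(2) eq by (metis)
  qed
  have inj: "\<And>\<alpha> \<beta>. E \<alpha> \<kappa> \<Longrightarrow> E \<beta> \<kappa> \<Longrightarrow> F \<alpha> = F \<beta> \<Longrightarrow> \<alpha> = \<beta>"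
    using tri[OF Z ordk] inj1 by metis
  obtain W where W: "isSet U W" "\<forall>z. E z W \<longleftrightarrow> (\<exists>p q. E p f \<and> E q p \<and> E z q)"
    using Z_uu[OF Z] by blast
  obtain R where R: "isSet U R" "\<forall>z. E z R \<longleftrightarrow> E z W \<and> U z" using Z_sepU[OF Z W(1)] by blast
  have Rc: "\<And>z. E z R \<longleftrightarrow> (\<exists>\<alpha>. E \<alpha> \<kappa> \<and> z = F \<alpha>)"
  proof
    fix z assume "E z R"
    then obtain p q where pq: "E p f" "E q p" "E z q" and Uz: "U z" using R W by blast
    obtain a b where ab: "is_opair E U p a b" using ff pq(1) by (auto simp: is_function_def)
    have rab: "rel E U f a b" using ab pq(1) by (auto simp: rel_def)
    have "z = a \<or> z = b" using ab pq(2,3) unfolding is_opair_def is_upair_def by blast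
    thus "\<exists>\<alpha>. E \<alpha> \<kappa> \<and> z = F \<alpha>" using Fu[OF rab] Uz kelset by blast
  next
    fix z assume "\<exists>\<alpha>. E \<alpha> \<kappa> \<and> z = F \<alpha>"
    then obtain \<alpha> where a: "E \<alpha> \<kappa>" and z: "z = F \<alpha>" by blast
    obtain p where p: "E p f" "is_opair E U p \<alpha> (F \<alpha>)" using Fr[OF a] by (auto simp: rel_def)
    obtain q where q: "is_upair E U q \<alpha> (F \<alpha>)" using Z_pair[OF Z] by blast
    show "E z R" using opair_mem[OF p(2) q] p(1) R W FU[OF a] z by blast
  qed
  have "equinumerous E U \<kappa> R"
    unfolding equinumerous_def
  proof (rule exI[of _ f], intro conjI allI impI)
    show "isSet U f" using ff by (simp add: is_function_def)
  next
    fix p assume "E p f"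
    then obtain a b where ab: "is_opair E U p a b" using ff by (auto simp: is_function_def)
    have "rel E U f a b" using ab \<open>E p f\<close> by (auto simp: rel_def)
    thus "\<exists>a b. E a \<kappa> \<and> E b R \<and> is_opair E U p a b" using Fu ab Rc by blast
  next
    fix a assume "E a \<kappa>"
    thus "\<exists>!b. rel E U f a b" using Fr funv by blast
  next
    fix b assume "E b R"
    then obtain \<alpha> where a: "E \<alpha> \<kappa>" "b = F \<alpha>" using Rc by blast
    show "\<exists>!a. rel E U f a b"
    proof (rule ex1I[of _ \<alpha>])
      show "rel E U f \<alpha> b" using Fr a by simp
      fix a' assume "rel E U f a' b"
      thus "a' = \<alpha>" using Fu inj a by metis
    qed
  qed
  moreover have "\<forall>z. E z R \<longrightarrow> U z" using R by blast
  ultimately show ?thesis unfolding realized_def using R(1) by blast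
qed

end
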